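(* Let $(Y^*,Y,X,W)$ be random variables with $Y^*\in\{0,1\}$ (true, unobserved outcome), $Y\in\{0,1\}$ (observed, possibly misreported outcome), covariates $X\in\mathcal X$, and $W$ taking values in a finite set of real numbers $\mathcal W=\{w_1,\dots,w_l\}$. Write $p^*(x)=\Pr(Y^*=1\mid X=x)$, $p_W(x,w)=\Pr(Y=1\mid X=x,W=w)$, and $$\underline p_w(x,w)=\inf_{\tilde w\in\mathcal W,\ \tilde w\le w}p_W(x,\tilde w),\qquad \bar p_w(x,w)=\sup_{\tilde w\in\mathcal W,\ \tilde w\le w}p_W(x,\tilde w).$$ Assume: (i) (Exclusion) $\Pr(Y^*=1\mid X=x,W=w)=p^*(x)$ for all $x\in\mathcal X$, $w\in\mathcal W$; (ii) (Monotonicity) for all $x\in\mathcal X$, $y\in\{0,1\}$ and $w_1>w_2$ in $\mathcal W$, $\Pr(Y=1-y\mid Y^*=y,x,w_1)\le\Pr(Y=1-y\mid Y^*=y,x,w_2)$; (iii) (Degree of misreporting) $\Pr(Y=1\mid Y^*=0,x,w)+\Pr(Y=0\mid Y^*=1,x,w)\le 1$ for all $x\in\mathcal X$, $w\in\mathcal W$; (iv) (Boundary condition) $0<p_W(x,w)<1$ for all $x\in\mathcal X$, $w\in\mathcal W$. Then for every $x\in\mathcal X$, $p^*(x)\in[L_2(x),U_2(x)]$, where $$L_2(x)=\sup_{w\in\mathcal W}\left\{\frac{p_W(x,w)-\underline p_w(x,w)}{1-\underline p_w(x,w)}\right\},\qquad U_2(x)=\inf_{w\in\mathcal W}\left\{\frac{p_W(x,w)}{\bar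 p_w(x,w)}\right\}.$$ Moreover, when $W$ is binary (i.e. $\mathcal W$ has two elements), these bounds are sharp (no tighter bounds on $p^*(x)$ are implied by the assumptions and the distribution of the observed variables $(Y,X,W)$).
   Context: Conditioning on $x,w$ means conditioning on $X=x,W=w$. $W$ is an instrument that affects only the misreporting probabilities $\Pr(Y=1-y\mid Y^*=y,\cdot)$, not the true outcome. *)

theory Defs
  imports "HOL-Probability.Probability"
begin

text \<open>For each covariate value x, D x is the conditional joint distribution of
  (Y*, Y, W) given X = x, as a pmf on bool \<times> bool \<times> real
  (True encodes the value 1, False the value 0).  Since Y*, Y are binary and
  W takes values in a finite set, this is fully general.\<close>

type_synonym cdist = "(bool \<times> bool \<times> real) pmf"

definition cprob :: "'a pmf \<Rightarrow> ('a \<Rightarrow> bool) \<Rightarrow> ('a \<Rightarrow> bool) \<Rightarrow> real" where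
  "cprob p A B = measure_pmf.prob p {z. A z \<and> B z} / measure_pmf.prob p {z. B z}"

definition pstar :: "('x \<Rightarrow> cdist) \<Rightarrow> 'x \<Rightarrow> real" where
  "pstar D x = measure_pmf.prob (D x) {z. fst z}"

definition pstarW :: "('x \<Rightarrow> cdist) \<Rightarrow> 'x \<Rightarrow> real \<Rightarrow> real" where
  "pstarW D x w = cprob (D x) (\<lambda>z. fst z) (\<lambda>z. snd (snd z) = w)"

definition pW :: "('x \<Rightarrow> cdist) \<Rightarrow> 'x \<Rightarrow> real \<Rightarrow> real" where
  "pW D x w = cprob (D x) (\<lambda>z. fst (snd z)) (\<lambda>z. snd (snd z) = w)"

definition misrep :: "('x \<Rightarrow> cdist) \<Rightarrow> 'x \<Rightarrow> real \<Rightarrow> bool \<Rightarrow> real" where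
  "misrep D x w y = cprob (D x) (\<lambda>z. fst (snd z) = (\<not> y)) (\<lambda>z. fst z = y \<and> snd (snd z) = w)"

definition observed :: "('x \<Rightarrow> cdist) \<Rightarrow> 'x \<Rightarrow> (bool \<times> real) pmf" where
  "observed D x = map_pmf snd (D x)"

definition pW_low :: "real set \<Rightarrow> ('x \<Rightarrow> cdist) \<Rightarrow> 'x \<Rightarrow> real \<Rightarrow> real" where
  "pW_low WW D x w = Inf {pW D x w' | w'. w' \<in> WW \<and> w' \<le> w}"

definition pW_up :: "real set \<Rightarrow> ('x \<Rightarrow> cdist) \<Rightarrow> 'x \<Rightarrow> real \<Rightarrow> real" where
  "pW_up WW D x w = Sup {pW D x w' | w'. w' \<in> WW \<and> w' \<le> w}"

definition L2 :: "real set \<Rightarrow> ('x \<Rightarrow> cdist) \<Rightarrow> 'x \<Rightarrow> real" where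
  "L2 WW D x = Sup ((\<lambda>w. (pW D x w - pW_low WW D x w) / (1 - pW_low WW D x w)) ` WW)"

definition U2 :: "real set \<Rightarrow> ('x \<Rightarrow> cdist) \<Rightarrow> 'x \<Rightarrow> real" where
  "U2 WW D x = Inf ((\<lambda>w. pW D x w / pW_up WW D x w) ` WW)"

text \<open>W takes values in WW and every w in WW has positive conditional probability
  (so that conditioning on W = w is meaningful).\<close>
definition W_support :: "real set \<Rightarrow> 'x set \<Rightarrow> ('x \<Rightarrow> cdist) \<Rightarrow> bool" where
  "W_support WW XX D \<longleftrightarrow> (\<forall>x\<in>XX. (\<forall>z\<in>set_pmf (D x). snd (snd z) \<in> WW) \<and>
      (\<forall>w\<in>WW. measure_pmf.prob (D x) {z. snd (snd z) = w} > 0))"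

definition exclusion :: "real set \<Rightarrow> 'x set \<Rightarrow> ('x \<Rightarrow> cdist) \<Rightarrow> bool" where
  "exclusion WW XX D \<longleftrightarrow> (\<forall>x\<in>XX. \<forall>w\<in>WW. pstarW D x w = pstar D x)"

definition monotonicity :: "real set \<Rightarrow> 'x set \<Rightarrow> ('x \<Rightarrow> cdist) \<Rightarrow> bool" where
  "monotonicity WW XX D \<longleftrightarrow> (\<forall>x\<in>XX. \<forall>y. \<forall>w1\<in>WW. \<forall>w2\<in>WW.
      w1 > w2 \<longrightarrow> misrep D x w1 y \<le> misrep D x w2 y)"

definition degree_misrep :: "real set \<Rightarrow> 'x set \<Rightarrow> ('x \<Rightarrow> cdist) \<Rightarrow> bool" where
  "degree_misrep WW XX D \<longleftrightarrow> (\<forall>x\<in>XX. \<forall>w\<in>WW. misrep D x w False + misrep D x w True \<le> 1)"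

definition boundary :: "real set \<Rightarrow> 'x set \<Rightarrow> ('x \<Rightarrow> cdist) \<Rightarrow> bool" where
  "boundary WW XX D \<longleftrightarrow> (\<forall>x\<in>XX. \<forall>w\<in>WW. 0 < pW D x w \<and> pW D x w < 1)"

definition model :: "real set \<Rightarrow> 'x set \<Rightarrow> ('x \<Rightarrow> cdist) \<Rightarrow> bool" where
  "model WW XX D \<longleftrightarrow> W_support WW XX D \<and> exclusion WW XX D \<and> monotonicity WW XX D
      \<and> degree_misrep WW XX D \<and> boundary WW XX D"

end

theory Submission
  imports Defs
begin


lemma cprob_nonneg: "0 \<le> cprob p A B"
  unfolding cprob_def by simp

lemma cprob_le1: "cprob p A B \<le> 1"
proof -
  have "measure_pmf.prob p {z. A z \<and> B z} \<le> measure_pmf.prob p {z. B z}"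
    by (rule measure_pmf.finite_measure_mono) auto
  moreover have "0 \<le> measure_pmf.prob p {z. B z}" by simp
  ultimately show ?thesis unfolding cprob_def
    by (cases "measure_pmf.prob p {z. B z} = 0") (auto simp: divide_le_eq_1 less_le)
qed

lemma arith1:
  fixes e11 e10 e01 e00 n :: real
  assumes "0 \<le> e11" "0 \<le> e10" "0 \<le> e01" "0 \<le> e00" "n = e11 + e10 + e01 + e00" "n > 0"
  shows "(e11 + e01) / n = (1 - e10 / (e11 + e10)) * ((e11 + e10) / n) + e01 / (e01 + e00) * (1 - (e11 + e10) / n)"
proof -
  have a: "(1 - e10 / (e11 + e10)) * (e11 + e10) = e11"
    using assms by (cases "e11 + e10 = 0") (auto simp: field_simps)
  have b: "e01 / (e01 + e00) * (e01 + e00) = e01"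
    using assms by (cases "e01 + e00 = 0") (auto simp: field_simps)
  have c: "1 - (e11 + e10) / n = (e01 + e00) / n" using assms by (simp add: field_simps)
  have "(1 - e10 / (e11 + e10)) * ((e11 + e10) / n) = e11 / n" using a by (metis times_divide_eq_right)
  moreover have "e01 / (e01 + e00) * ((e01 + e00) / n) = e01 / n" using b by (metis times_divide_eq_right)
  ultimately show ?thesis unfolding c by (simp add: add_divide_distrib)
qed

lemma split_prob:
  fixes P :: "'a pmf"
  shows "measure_pmf.prob P {z. B z} = measure_pmf.prob P {z. A z \<and> B z} + measure_pmf.prob P {z. \<not> A z \<and> B z}"
proof -
  have eq: "{z. B z} = {z. A z \<and> B z} \<union> {z. \<not> A z \<and> B z}" by auto
  show ?thesis by (subst eq) (rule measure_pmf.finite_measure_Union, auto)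
qed

lemma decomp:
  fixes P :: cdist
  assumes "measure_pmf.prob P {z. snd (snd z) = w} > 0"
  shows "cprob P (\<lambda>z. fst (snd z)) (\<lambda>z. snd (snd z) = w) =
    (1 - cprob P (\<lambda>z. fst (snd z) = (\<not> True)) (\<lambda>z. fst z = True \<and> snd (snd z) = w)) * cprob P (\<lambda>z. fst z) (\<lambda>z. snd (snd z) = w)
    + cprob P (\<lambda>z. fst (snd z) = (\<not> False)) (\<lambda>z. fst z = False \<and> snd (snd z) = w) * (1 - cprob P (\<lambda>z. fst z) (\<lambda>z. snd (snd z) = w))"
proof -
  define pr where "pr = measure_pmf.prob P"
  define e where "e s t = pr {z. fst z = s \<and> fst (snd z) = t \<and> snd (snd z) = w}" for s t
  have n: "pr {z. snd (snd z) = w} = e True True + e True False + e False True + e False False"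
    unfolding e_def pr_def
    using split_prob[of P "\<lambda>z. snd (snd z) = w" "\<lambda>z. fst z"]
      split_prob[of P "\<lambda>z. fst z \<and> snd (snd z) = w" "\<lambda>z. fst (snd z)"]
      split_prob[of P "\<lambda>z. \<not> fst z \<and> snd (snd z) = w" "\<lambda>z. fst (snd z)"]
    by (simp add: conj_ac)
  have s1: "pr {z. fst z = True \<and> snd (snd z) = w} = e True True + e True False"
    unfolding e_def pr_def
    using split_prob[of P "\<lambda>z. fst z = True \<and> snd (snd z) = w" "\<lambda>z. fst (snd z)"] by (simp add: conj_ac)
  have s0: "pr {z. fst z = False \<and> snd (snd z) = w} = e False True + e False False"
    unfolding e_def pr_def
    using split_prob[of P "\<lambda>z. fst z = False \<and> snd (snd z) = w" "\<lambda>z. fst (snd z)"] by (simp add: conj_ac)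
  have y: "pr {z. fst (snd z) \<and> snd (snd z) = w} = e True True + e False True"
    unfolding e_def pr_def
    using split_prob[of P "\<lambda>z. fst (snd z) \<and> snd (snd z) = w" "\<lambda>z. fst z"] by (simp add: conj_ac)
  have s1': "pr {z. fst z \<and> snd (snd z) = w} = e True True + e True False" using s1 by simp
  have e10: "pr {z. fst (snd z) = (\<not> True) \<and> fst z = True \<and> snd (snd z) = w} = e True False"
    unfolding e_def by (simp add: conj_ac)
  have e01: "pr {z. fst (snd z) = (\<not> False) \<and> fst z = False \<and> snd (snd z) = w} = e False True"
    unfolding e_def by (simp add: conj_ac)
  have nn: "\<And>s t. e s t \<ge> 0" unfolding e_def pr_def by simp
  show ?thesis unfolding cprob_def pr_def[symmetric]
    unfolding n s1 s0 y s1' e10 e01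
    by (rule arith1[OF nn nn nn nn refl]) (use assms n in \<open>simp add: pr_def\<close>)
qed



lemma key:
  assumes "W_support WW XX D" "exclusion WW XX D" "x \<in> XX" "w \<in> WW"
  shows "pW D x w = (1 - misrep D x w True) * pstar D x + misrep D x w False * (1 - pstar D x)"
proof -
  have pos: "measure_pmf.prob (D x) {z. snd (snd z) = w} > 0"
    using assms unfolding W_support_def by blast
  have ex: "pstarW D x w = pstar D x" using assms unfolding exclusion_def by blast
  show ?thesis using decomp[OF pos] ex unfolding pW_def misrep_def pstarW_def by simp
qed

lemma pt_bounds:
  fixes a b a' b' p q q' :: real
  assumes "0 \<le> p" "p \<le> 1" "0 \<le> a" "0 \<le> b" "a \<le> a'" "b \<le> b'" "a' + b' \<le> 1"
    "q = (1 - b) * p + a * (1 - p)" "q' = (1 - b') * p + a' * (1 - p)"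
  shows "p * q' \<le> q" "q \<le> p + (1 - p) * q'"
proof -
  have h1: "a' * (1 - p) \<le> (1 - b') * (1 - p)" using mult_right_mono[of a' "1 - b'" "1 - p"] assms by simp
  have "q' \<le> 1 - b'" using h1 assms(9) by (simp add: algebra_simps)
  then have "p * q' \<le> p * (1 - b')" using mult_left_mono assms(1) by blast
  also have "\<dots> \<le> p * (1 - b)" using mult_left_mono[of "1 - b'" "1 - b" p] assms(1,6) by simp
  also have "\<dots> \<le> q" using assms mult_nonneg_nonneg[of a "1 - p"] by (simp add: algebra_simps)
  finally show "p * q' \<le> q" .
  have h2: "a' * p \<le> (1 - b') * p" using mult_right_mono[of a' "1 - b'" p] assms by simp
  have "q' \<ge> a'" using h2 assms(9) by (simp add: algebra_simps)
  then have "q' \<ge> a" using assms by linarith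
  have h3: "(1 - b) * p \<le> p" using assms by (simp add: mult_left_le_one_le)
  have "q \<le> p + a * (1 - p)" using h3 assms(8) by simp
  also have "\<dots> \<le> p + q' * (1 - p)" using mult_right_mono[of a q' "1 - p"] \<open>q' \<ge> a\<close> assms(2) by simp
  finally show "q \<le> p + (1 - p) * q'" by (simp add: algebra_simps)
qed

lemma pstar_01: "0 \<le> pstar D x" "pstar D x \<le> 1"
  unfolding pstar_def by auto

lemma part1:
  assumes "finite WW" "WW \<noteq> {}" "W_support WW XX D" "exclusion WW XX D"
    "monotonicity WW XX D" "degree_misrep WW XX D" "boundary WW XX D" "x \<in> XX"
  shows "L2 WW D x \<le> pstar D x \<and> pstar D x \<le> U2 WW D x"
proof -
  define p where "p = pstar D x"
  have p01: "0 \<le> p" "p \<le> 1" unfolding p_def by (rule pstar_01)+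
  have rel: "p * pW D x w' \<le> pW D x w \<and> pW D x w \<le> p + (1 - p) * pW D x w'"
    if "w \<in> WW" "w' \<in> WW" "w' \<le> w" for w w'
  proof -
    have m: "misrep D x w y \<le> misrep D x w' y" for y
    proof (cases "w' = w")
      case False
      then have "w > w'" using that by auto
      then show ?thesis using assms(5) that \<open>x \<in> XX\<close> unfolding monotonicity_def by blast
    qed simp
    have d: "misrep D x w' False + misrep D x w' True \<le> 1"
      using assms(6) that \<open>x \<in> XX\<close> unfolding degree_misrep_def by blast
    have k1: "pW D x w = (1 - misrep D x w True) * p + misrep D x w False * (1 - p)"
      using key[OF assms(3,4,8) that(1)] unfolding p_def .
    have k2: "pW D x w' = (1 - misrep D x w' True) * p + misrep D x w' False * (1 - p)"
      using key[OF assms(3,4,8) that(2)] unfolding p_def .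
    have n0: "0 \<le> misrep D x w y" for y unfolding misrep_def by (rule cprob_nonneg)
    show ?thesis
      using pt_bounds[OF p01 n0 n0 m[of False] m[of True] d k1 k2] by simp
  qed
  have bd: "0 < pW D x w \<and> pW D x w < 1" if "w \<in> WW" for w
    using assms(7,8) that unfolding boundary_def by blast
  define S where "S w = {pW D x w' | w'. w' \<in> WW \<and> w' \<le> w}" for w
  have Sfin: "finite (S w)" for w
  proof -
    have "S w = (\<lambda>w'. pW D x w') ` {w'\<in>WW. w' \<le> w}" unfolding S_def by auto
    then show ?thesis using assms(1) by simp
  qed
  have Sne: "S w \<noteq> {}" if "w \<in> WW" for w unfolding S_def using that by auto
  have low: "\<exists>w'. w' \<in> WW \<and> w' \<le> w \<and> pW_low WW D x w = pW D x w'" if "w \<in> WW" for w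
  proof -
    have "pW_low WW D x w = Min (S w)" unfolding pW_low_def S_def[symmetric]
      using cInf_eq_Min[OF Sfin Sne[OF that]] by simp
    moreover have "Min (S w) \<in> S w" using Min_in[OF Sfin Sne[OF that]] .
    ultimately show ?thesis unfolding S_def by auto
  qed
  have up: "\<exists>w'. w' \<in> WW \<and> w' \<le> w \<and> pW_up WW D x w = pW D x w'" if "w \<in> WW" for w
  proof -
    have "pW_up WW D x w = Max (S w)" unfolding pW_up_def S_def[symmetric]
      using cSup_eq_Max[OF Sfin Sne[OF that]] by simp
    moreover have "Max (S w) \<in> S w" using Max_in[OF Sfin Sne[OF that]] .
    ultimately show ?thesis unfolding S_def by auto
  qed
  have "L2 WW D x \<le> p" unfolding L2_def
  proof (rule cSUP_least[OF assms(2)])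
    fix w assume w: "w \<in> WW"
    obtain w' where w': "w' \<in> WW" "w' \<le> w" "pW_low WW D x w = pW D x w'" using low[OF w] by blast
    have r: "pW D x w \<le> p + (1 - p) * pW D x w'" using rel[OF w w'(1,2)] by simp
    have "1 - pW D x w' > 0" using bd[OF w'(1)] by simp
    then show "(pW D x w - pW_low WW D x w) / (1 - pW_low WW D x w) \<le> p"
      unfolding w'(3) using r by (simp add: divide_le_eq algebra_simps)
  qed
  moreover have "p \<le> U2 WW D x" unfolding U2_def
  proof (rule cINF_greatest[OF assms(2)])
    fix w assume w: "w \<in> WW"
    obtain w' where w': "w' \<in> WW" "w' \<le> w" "pW_up WW D x w = pW D x w'" using up[OF w] by blast
    have r: "p * pW D x w' \<le> pW D x w" using rel[OF w w'(1,2)] by simp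
    have "pW D x w' > 0" using bd[OF w'(1)] by simp
    then show "p \<le> pW D x w / pW_up WW D x w"
      unfolding w'(3) using r by (simp add: le_divide_eq algebra_simps)
  qed
  ultimately show ?thesis unfolding p_def by blast
qed



lemma obs_prob:
  fixes P P' :: cdist
  assumes "map_pmf snd P' = map_pmf snd P"
  shows "measure_pmf.prob P' {z. Q (snd z)} = measure_pmf.prob P {z. Q (snd z)}"
proof -
  have "measure_pmf.prob (map_pmf snd P') {y. Q y} = measure_pmf.prob (map_pmf snd P) {y. Q y}"
    using assms by simp
  then show ?thesis by (simp add: vimage_def)
qed

lemma part_prob:
  fixes P :: cdist
  assumes "finite WW" "\<forall>z\<in>set_pmf P. snd (snd z) \<in> WW"
  shows "measure_pmf.prob P {z. Q z} = (\<Sum>w\<in>WW. measure_pmf.prob P {z. Q z \<and> snd (snd z) = w})"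
proof -
  have eq: "{z. Q z} \<inter> set_pmf P = (\<Union>w\<in>WW. {z. Q z \<and> snd (snd z) = w}) \<inter> set_pmf P"
  proof (intro equalityI subsetI)
    fix z assume "z \<in> {z. Q z} \<inter> set_pmf P"
    then show "z \<in> (\<Union>w\<in>WW. {z. Q z \<and> snd (snd z) = w}) \<inter> set_pmf P"
      using assms(2) by blast
  qed blast
  have "measure_pmf.prob P {z. Q z} = measure_pmf.prob P ({z. Q z} \<inter> set_pmf P)"
    by (rule measure_Int_set_pmf[symmetric])
  also have "\<dots> = measure_pmf.prob P ((\<Union>w\<in>WW. {z. Q z \<and> snd (snd z) = w}) \<inter> set_pmf P)"
    by (simp only: eq)
  also have "\<dots> = measure_pmf.prob P (\<Union>w\<in>WW. {z. Q z \<and> snd (snd z) = w})"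
    by (rule measure_Int_set_pmf)
  also have "\<dots> = (\<Sum>w\<in>WW. measure_pmf.prob P {z. Q z \<and> snd (snd z) = w})"
    by (rule measure_pmf.finite_measure_finite_Union) (auto simp: assms(1) disjoint_family_on_def)
  finally show ?thesis .
qed

lemma pmf_constr:
  fixes N :: "(bool \<times> real) pmf"
  shows "pmf (bind_pmf N (\<lambda>yw. map_pmf (\<lambda>s. (s, fst yw, snd yw)) (bernoulli_pmf (th (fst yw) (snd yw))))) (s, t, w)
     = pmf N (t, w) * pmf (bernoulli_pmf (th t w)) s"
proof -
  have "pmf (bind_pmf N (\<lambda>yw. map_pmf (\<lambda>s. (s, fst yw, snd yw)) (bernoulli_pmf (th (fst yw) (snd yw))))) (s, t, w)
    = (\<integral>yw. pmf (map_pmf (\<lambda>s. (s, fst yw, snd yw)) (bernoulli_pmf (th (fst yw) (snd yw)))) (s, t, w) \<partial>measure_pmf N)"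
    by (rule pmf_bind)
  also have "\<dots> = (\<Sum>a\<in>{(t,w)}. pmf (map_pmf (\<lambda>s. (s, fst a, snd a)) (bernoulli_pmf (th (fst a) (snd a)))) (s, t, w) * pmf N a)"
  proof (rule integral_measure_pmf_real)
    fix a assume "pmf (map_pmf (\<lambda>s. (s, fst a, snd a)) (bernoulli_pmf (th (fst a) (snd a)))) (s, t, w) \<noteq> 0"
    then have "(\<lambda>s. (s, fst a, snd a)) -` {(s, t, w)} \<noteq> {}" by (auto simp: pmf_map)
    then show "a \<in> {(t, w)}" by (cases a) auto
  qed simp
  also have "\<dots> = pmf N (t, w) * pmf (bernoulli_pmf (th t w)) s"
  proof -
    have "(\<lambda>s'. (s', t, w)) -` {(s, t, w)} = {s}" by auto
    then show ?thesis by (simp add: pmf_map measure_pmf_single)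
  qed
  finally show ?thesis .
qed

lemma obs_constr:
  fixes N :: "(bool \<times> real) pmf"
  shows "map_pmf snd (bind_pmf N (\<lambda>yw. map_pmf (\<lambda>s. (s, fst yw, snd yw)) (bernoulli_pmf (th (fst yw) (snd yw))))) = N"
  by (simp add: map_bind_pmf map_pmf_comp o_def bind_return_pmf')



lemma constr:
  fixes P :: cdist and WW :: "real set" and c :: real and v :: "real \<Rightarrow> real"
  defines "pr \<equiv> \<lambda>w. measure_pmf.prob P {z. snd (snd z) = w}"
  defines "q \<equiv> \<lambda>w. cprob P (\<lambda>z. fst (snd z)) (\<lambda>z. snd (snd z) = w)"
  assumes fin: "finite WW" and supp: "\<forall>z\<in>set_pmf P. snd (snd z) \<in> WW"
    and pos: "\<forall>w\<in>WW. pr w > 0" and q01: "\<forall>w\<in>WW. 0 < q w \<and> q w < 1"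
    and c01: "0 \<le> c" "c \<le> 1"
    and vb: "\<forall>w\<in>WW. 0 \<le> v w \<and> v w \<le> q w \<and> v w \<le> c \<and> c - v w \<le> 1 - q w"
  shows "\<exists>P'. map_pmf snd P' = map_pmf snd P \<and> measure_pmf.prob P' {z. fst z} = c \<and>
    (\<forall>w\<in>WW. cprob P' fst (\<lambda>z. snd (snd z) = w) = c \<and>
       cprob P' (\<lambda>z. fst (snd z) = (\<not> True)) (\<lambda>z. fst z = True \<and> snd (snd z) = w) = (c - v w) / c \<and>
       cprob P' (\<lambda>z. fst (snd z) = (\<not> False)) (\<lambda>z. fst z = False \<and> snd (snd z) = w) = (q w - v w) / (1 - c))"
proof -
  define N where "N = map_pmf snd P"
  define th where "th y w = (if y then v w / q w else (c - v w) / (1 - q w))" for y w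
  define P' where "P' = bind_pmf N (\<lambda>yw. map_pmf (\<lambda>s. (s, fst yw, snd yw)) (bernoulli_pmf (th (fst yw) (snd yw))))"
  have obs: "map_pmf snd P' = map_pmf snd P" unfolding P'_def N_def by (rule obs_constr)
  have pm: "pmf P' (s, t, w) = pmf N (t, w) * pmf (bernoulli_pmf (th t w)) s" for s t w
    unfolding P'_def by (rule pmf_constr)
  have nT: "pmf N (True, w) = q w * pr w" if "w \<in> WW" for w
  proof -
    have "pmf N (True, w) = measure_pmf.prob P {z. fst (snd z) \<and> snd (snd z) = w}"
      unfolding N_def pmf_map by (rule arg_cong[where f = "measure_pmf.prob P"]) auto
    moreover have "pr w \<noteq> 0" using pos that by auto
    ultimately show ?thesis unfolding q_def cprob_def pr_def by simp
  qed
  have nF: "pmf N (False, w) = (1 - q w) * pr w" if "w \<in> WW" for w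
  proof -
    have "pmf N (False, w) = measure_pmf.prob P {z. \<not> fst (snd z) \<and> snd (snd z) = w}"
      unfolding N_def pmf_map by (rule arg_cong[where f = "measure_pmf.prob P"]) auto
    moreover have "pr w = measure_pmf.prob P {z. fst (snd z) \<and> snd (snd z) = w} + measure_pmf.prob P {z. \<not> fst (snd z) \<and> snd (snd z) = w}"
      unfolding pr_def by (rule split_prob)
    moreover have "pmf N (True, w) = measure_pmf.prob P {z. fst (snd z) \<and> snd (snd z) = w}"
      unfolding N_def pmf_map by (rule arg_cong[where f = "measure_pmf.prob P"]) auto
    ultimately have "pmf N (False, w) = pr w - pmf N (True, w)" by linarith
    then show ?thesis using nT[OF that] by (simp add: algebra_simps)
  qed
  have pp: "pr w \<noteq> 0" if "w \<in> WW" for w using pos that by fastforce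
  have qq: "0 < q w" "q w < 1" if "w \<in> WW" for w using q01 that by auto
  have thT: "0 \<le> th True w \<and> th True w \<le> 1" if "w \<in> WW" for w
    using vb q01 that unfolding th_def by (auto simp: divide_le_eq_1)
  have thF: "0 \<le> th False w \<and> th False w \<le> 1" if "w \<in> WW" for w
  proof -
    have "0 < 1 - q w" using q01 that by simp
    moreover have "0 \<le> c - v w" "c - v w \<le> 1 - q w" using vb that by auto
    ultimately show ?thesis unfolding th_def by (simp add: divide_le_eq_1)
  qed
  have mTT: "pmf P' (True, True, w) = pr w * v w" if "w \<in> WW" for w
    using pm[of True True w] nT[OF that] thT[OF that] qq[OF that] unfolding th_def by simp
  have mTF: "pmf P' (True, False, w) = pr w * (c - v w)" if "w \<in> WW" for w
  proof -
    have "0 < 1 - q w" using q01 that by simp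
    then show ?thesis using pm[of True False w] nF[OF that] thF[OF that] unfolding th_def by simp
  qed
  have mFT: "pmf P' (False, True, w) = pr w * (q w - v w)" if "w \<in> WW" for w
    using pm[of False True w] nT[OF that] thT[OF that] qq[OF that] unfolding th_def
    by (simp add: algebra_simps)
  have pr2: "measure_pmf.prob P' {z. fst z = s \<and> snd (snd z) = w} = pmf P' (s, True, w) + pmf P' (s, False, w)" for s w
  proof -
    have "{z. fst z = s \<and> snd (snd z) = w} = {(s, True, w), (s, False, w)}" by auto
    then show ?thesis by (simp add: measure_measure_pmf_finite)
  qed
  have pr1: "measure_pmf.prob P' {z. fst (snd z) = t \<and> fst z = s \<and> snd (snd z) = w} = pmf P' (s, t, w)" for s t w
  proof -
    have "{z. fst (snd z) = t \<and> fst z = s \<and> snd (snd z) = w} = {(s, t, w)}" by auto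
    then show ?thesis by (simp add: measure_pmf_single)
  qed
  have prW: "measure_pmf.prob P' {z. snd (snd z) = w} = pr w" for w
    unfolding pr_def using obs_prob[OF obs, of "\<lambda>y. snd y = w"] by simp
  have cw: "cprob P' fst (\<lambda>z. snd (snd z) = w) = c" if "w \<in> WW" for w
  proof -
    have "measure_pmf.prob P' {z. fst z \<and> snd (snd z) = w} = pr w * c"
      using pr2[of True w] mTT[OF that] mTF[OF that] by (simp add: algebra_simps)
    then show ?thesis unfolding cprob_def prW using pp[OF that] by simp
  qed
  have bT: "cprob P' (\<lambda>z. fst (snd z) = (\<not> True)) (\<lambda>z. fst z = True \<and> snd (snd z) = w) = (c - v w) / c"
    if "w \<in> WW" for w
  proof -
    have "measure_pmf.prob P' {z. fst z = True \<and> snd (snd z) = w} = pr w * c"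
      using pr2[of True w] mTT[OF that] mTF[OF that] by (simp add: algebra_simps)
    moreover have "measure_pmf.prob P' {z. fst (snd z) = (\<not> True) \<and> (fst z = True \<and> snd (snd z) = w)} = pr w * (c - v w)"
      using pr1[of "\<not> True" True w] mTF[OF that] by simp
    ultimately show ?thesis unfolding cprob_def using pp[OF that] by simp
  qed
  have bF: "cprob P' (\<lambda>z. fst (snd z) = (\<not> False)) (\<lambda>z. fst z = False \<and> snd (snd z) = w) = (q w - v w) / (1 - c)"
    if "w \<in> WW" for w
  proof -
    have "pr w = pmf N (True, w) + pmf N (False, w)" using nT[OF that] nF[OF that] by (simp add: algebra_simps)
    have "measure_pmf.prob P' {z. fst z = False \<and> snd (snd z) = w} = pr w * (1 - c)"
    proof -
      have s: "measure_pmf.prob P' {z. fst z \<and> snd (snd z) = w} + measure_pmf.prob P' {z. \<not> fst z \<and> snd (snd z) = w} = pr w"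
        using split_prob[of P' "\<lambda>z. snd (snd z) = w" fst] prW[of w] by simp
      have "measure_pmf.prob P' {z. fst z \<and> snd (snd z) = w} = pr w * c"
        using pr2[of True w] mTT[OF that] mTF[OF that] by (simp add: algebra_simps)
      then show ?thesis using s by (simp add: algebra_simps)
    qed
    moreover have "measure_pmf.prob P' {z. fst (snd z) = (\<not> False) \<and> (fst z = False \<and> snd (snd z) = w)} = pr w * (q w - v w)"
      using pr1[of "\<not> False" False w] mFT[OF that] by simp
    ultimately show ?thesis unfolding cprob_def using pp[OF that] by simp
  qed
  have suppP': "\<forall>z\<in>set_pmf P'. snd (snd z) \<in> WW"
  proof
    fix z assume "z \<in> set_pmf P'"
    then have "snd z \<in> set_pmf (map_pmf snd P')" by simp
    then have "snd z \<in> snd ` set_pmf P" unfolding obs by simp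
    then show "snd (snd z) \<in> WW" using supp by auto
  qed
  have pst: "measure_pmf.prob P' {z. fst z} = c"
  proof -
    have "measure_pmf.prob P' {z. fst z} = (\<Sum>w\<in>WW. measure_pmf.prob P' {z. fst z \<and> snd (snd z) = w})"
      by (rule part_prob[OF fin suppP'])
    also have "\<dots> = (\<Sum>w\<in>WW. c * pr w)"
    proof (rule sum.cong[OF refl])
      fix w assume w: "w \<in> WW"
      show "measure_pmf.prob P' {z. fst z \<and> snd (snd z) = w} = c * pr w"
        using pr2[of True w] mTT[OF w] mTF[OF w] by (simp add: algebra_simps)
    qed
    also have "\<dots> = c * (\<Sum>w\<in>WW. pr w)" by (simp add: sum_distrib_left)
    also have "(\<Sum>w\<in>WW. pr w) = 1"
    proof -
      have "measure_pmf.prob P {z. True} = (\<Sum>w\<in>WW. measure_pmf.prob P {z. True \<and> snd (snd z) = w})"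
        by (rule part_prob[OF fin supp])
      then show ?thesis unfolding pr_def by simp
    qed
    finally show ?thesis by simp
  qed
  show ?thesis
    by (rule exI[of _ P']) (use obs pst cw bT bF in blast)
qed



lemma arith2:
  fixes q1 q2 c v1 v2 :: real
  assumes q: "0 < q1" "q1 < 1" "0 < q2" "q2 < 1" and c: "0 \<le> c" "c \<le> 1"
    and hL: "q2 - min q1 q2 \<le> c * (1 - min q1 q2)" and hU: "c * max q1 q2 \<le> q2"
    and v1: "v1 = q1 * c" and v2: "v2 = q1 * c + max 0 (q2 - q1)"
  shows "0 \<le> v1 \<and> v1 \<le> q1 \<and> v1 \<le> c \<and> c - v1 \<le> 1 - q1"
    "0 \<le> v2 \<and> v2 \<le> q2 \<and> v2 \<le> c \<and> c - v2 \<le> 1 - q2"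
    "(q1 - v1) / (1 - c) + (c - v1) / c \<le> 1"
    "(q2 - v2) / (1 - c) + (c - v2) / c \<le> 1"
    "(q2 - v2) / (1 - c) \<le> (q1 - v1) / (1 - c)"
    "(c - v2) / c \<le> (c - v1) / c"
proof -
  have qc: "q1 * c \<le> q1" "q1 * c \<le> c" "0 \<le> q1 * c" using q c by (auto simp: mult_left_le mult_left_le_one_le)
  have qc2: "q1 * c \<le> c * max q1 q2" by (simp add: mult.commute mult_left_mono c)
  show 1: "0 \<le> v1 \<and> v1 \<le> q1 \<and> v1 \<le> c \<and> c - v1 \<le> 1 - q1"
  proof -
    have "c * (1 - q1) \<le> 1 - q1" using q c by (simp add: mult_left_le_one_le)
    then show ?thesis using qc v1 by (simp add: algebra_simps)
  qed
  show 2: "0 \<le> v2 \<and> v2 \<le> q2 \<and> v2 \<le> c \<and> c - v2 \<le> 1 - q2"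
  proof (cases "q1 \<le> q2")
    case True
    then have "min q1 q2 = q1" "max q1 q2 = q2" "max 0 (q2 - q1) = q2 - q1" by auto
    moreover have "c * (1 - q1) \<le> 1 - q1" using q c by (simp add: mult_left_le_one_le)
    ultimately show ?thesis using qc v2 hL True by (simp add: algebra_simps)
  next
    case False
    then have "min q1 q2 = q2" "max q1 q2 = q1" "max 0 (q2 - q1) = 0" by auto
    moreover have "c * (1 - q1) \<le> 1 - q1" using q c by (simp add: mult_left_le_one_le)
    ultimately show ?thesis using qc v2 hU False by (simp add: algebra_simps)
  qed
  have a1: "(q1 - v1) / (1 - c) \<le> q1"
  proof (cases "c = 1")
    case False
    then have "1 - c > 0" using c by simp
    then show ?thesis using v1 q by (simp add: divide_le_eq algebra_simps)
  qed (use q in simp)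
  have a1': "(q1 - v1) / (1 - c) \<le> 1 - (c - v1) / c"
  proof (cases "c = 0")
    case True then show ?thesis using v1 q by simp
  next
    case False
    then have "(c - v1) / c = 1 - q1" using v1 by (simp add: field_simps)
    then show ?thesis using a1 by simp
  qed
  then show "(q1 - v1) / (1 - c) + (c - v1) / c \<le> 1" by simp
  show m1: "(q2 - v2) / (1 - c) \<le> (q1 - v1) / (1 - c)"
    by (rule divide_right_mono) (use v1 v2 c in \<open>auto simp: max_def\<close>)
  show m2: "(c - v2) / c \<le> (c - v1) / c"
    by (rule divide_right_mono) (use v1 v2 c in \<open>auto simp: max_def\<close>)
  show "(q2 - v2) / (1 - c) + (c - v2) / c \<le> 1"
  proof (cases "q1 \<le> q2")
    case True
    then have "q2 - v2 = q1 - v1" using v1 v2 by simp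
    then show ?thesis using a1' m2 by simp
  next
    case False
    then have "v2 = v1" using v1 v2 by simp
    then show ?thesis using a1' m1 by simp
  qed
qed


lemma model_pointwise:
  "model WW XX D \<longleftrightarrow> (\<forall>x'\<in>XX. model WW {x'} (\<lambda>_. D x'))"
  unfolding model_def W_support_def exclusion_def monotonicity_def degree_misrep_def boundary_def
    pstar_def pstarW_def pW_def misrep_def
  by blast

lemma model_upd:
  assumes "model WW XX D" "model WW {x} (\<lambda>_. P)"
  shows "model WW XX (D(x := P))"
  unfolding model_pointwise[of WW XX "D(x := P)"]
proof
  fix x' assume x': "x' \<in> XX"
  show "model WW {x'} (\<lambda>_. (D(x := P)) x')"
  proof (cases "x' = x")
    case True then show ?thesis using assms(2) by simp
  next
    case False then show ?thesis using assms(1) x' unfolding model_pointwise[of WW XX D] by simp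
  qed
qed

lemma part2:
  assumes fin: "finite WW" and M: "model WW XX D" and card: "card WW = 2"
    and x: "x \<in> XX" and cL: "L2 WW D x \<le> c" and cU: "c \<le> U2 WW D x"
  shows "\<exists>D'. model WW XX D' \<and> (\<forall>x'\<in>XX. observed D' x' = observed D x') \<and> pstar D' x = c"
proof -
  have WS: "W_support WW XX D" and BD: "boundary WW XX D" using M unfolding model_def by auto
  obtain w1 w2 where W: "WW = {w1, w2}" and lt: "w1 < w2"
  proof -
    obtain a b where ab: "WW = {a, b}" "a \<noteq> b" using card unfolding card_2_iff by blast
    show ?thesis
    proof (cases "a < b")
      case True then show ?thesis using that ab by blast
    next
      case False then have "b < a" using ab by auto
      then show ?thesis using that ab by (metis insert_commute)
    qed
  qed
  define q1 where "q1 = pW D x w1"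
  define q2 where "q2 = pW D x w2"
  have q1b: "0 < q1" "q1 < 1" using BD x W unfolding boundary_def q1_def by auto
  have q2b: "0 < q2" "q2 < 1" using BD x W unfolding boundary_def q2_def by auto
  have S1: "{pW D x w' | w'. w' \<in> WW \<and> w' \<le> w1} = {q1}" using W lt unfolding q1_def by auto
  have S2: "{pW D x w' | w'. w' \<in> WW \<and> w' \<le> w2} = {q1, q2}" using W lt unfolding q1_def q2_def by auto
  have low1: "pW_low WW D x w1 = q1" unfolding pW_low_def S1 by simp
  have up1: "pW_up WW D x w1 = q1" unfolding pW_up_def S1 by simp
  have low2: "pW_low WW D x w2 = min q1 q2" unfolding pW_low_def S2 by (simp add: cInf_eq_Min)
  have up2: "pW_up WW D x w2 = max q1 q2" unfolding pW_up_def S2 by (simp add: cSup_eq_Max)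
  define f where "f w = (pW D x w - pW_low WW D x w) / (1 - pW_low WW D x w)" for w
  define g where "g w = pW D x w / pW_up WW D x w" for w
  have "f w1 \<le> L2 WW D x" "f w2 \<le> L2 WW D x" unfolding L2_def f_def[symmetric]
    by (rule cSUP_upper, use W in simp, rule bdd_above_finite, use fin in simp)+
  then have c0: "0 \<le> c" and L: "(q2 - min q1 q2) / (1 - min q1 q2) \<le> c"
    using cL unfolding f_def low1 low2 q2_def[symmetric] q1_def[symmetric] by auto
  have "U2 WW D x \<le> g w1" "U2 WW D x \<le> g w2" unfolding U2_def g_def[symmetric]
    by (rule cINF_lower, rule bdd_below_finite, use fin in simp, use W in simp)+
  then have c1: "c \<le> 1" and U: "c \<le> q2 / max q1 q2"
    using cU q1b unfolding g_def up1 up2 q2_def[symmetric] q1_def[symmetric] by auto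
  have hL: "q2 - min q1 q2 \<le> c * (1 - min q1 q2)"
  proof -
    have "1 - min q1 q2 > 0" using q1b q2b by (simp add: min_def)
    then show ?thesis using L by (simp add: pos_divide_le_eq)
  qed
  have hU: "c * max q1 q2 \<le> q2"
  proof -
    have "max q1 q2 > 0" using q1b q2b by (simp add: max_def)
    then show ?thesis using U by (simp add: pos_le_divide_eq)
  qed
  define v where "v w = (if w = w1 then q1 * c else q1 * c + max 0 (q2 - q1))" for w
  note ar = arith2[OF q1b q2b c0 c1 hL hU refl refl]
  have v1: "v w1 = q1 * c" and v2: "v w2 = q1 * c + max 0 (q2 - q1)" unfolding v_def using lt by auto
  have qw: "pW D x w = (if w = w1 then q1 else q2)" if "w \<in> WW" for w
    using that W unfolding q1_def q2_def by auto
  have pos: "\<forall>w\<in>WW. measure_pmf.prob (D x) {z. snd (snd z) = w} > 0"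
    and supp: "\<forall>z\<in>set_pmf (D x). snd (snd z) \<in> WW"
    using WS x unfolding W_support_def by auto
  have q01: "\<forall>w\<in>WW. 0 < cprob (D x) (\<lambda>z. fst (snd z)) (\<lambda>z. snd (snd z) = w) \<and>
      cprob (D x) (\<lambda>z. fst (snd z)) (\<lambda>z. snd (snd z) = w) < 1"
    using qw q1b q2b unfolding pW_def[symmetric] by auto
  have vb: "\<forall>w\<in>WW. 0 \<le> v w \<and> v w \<le> cprob (D x) (\<lambda>z. fst (snd z)) (\<lambda>z. snd (snd z) = w) \<and> v w \<le> c
      \<and> c - v w \<le> 1 - cprob (D x) (\<lambda>z. fst (snd z)) (\<lambda>z. snd (snd z) = w)"
    unfolding pW_def[symmetric] using qw ar(1,2) v1 v2 W lt by auto
  obtain P' where obs: "map_pmf snd P' = map_pmf snd (D x)" and pst: "measure_pmf.prob P' {z. fst z} = c"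
    and cw: "\<forall>w\<in>WW. cprob P' fst (\<lambda>z. snd (snd z) = w) = c \<and>
       cprob P' (\<lambda>z. fst (snd z) = (\<not> True)) (\<lambda>z. fst z = True \<and> snd (snd z) = w) = (c - v w) / c \<and>
       cprob P' (\<lambda>z. fst (snd z) = (\<not> False)) (\<lambda>z. fst z = False \<and> snd (snd z) = w)
         = (cprob (D x) (\<lambda>z. fst (snd z)) (\<lambda>z. snd (snd z) = w) - v w) / (1 - c)"
    using constr[OF fin supp pos q01 c0 c1 vb] by blast
  define E where "E = (\<lambda>_::'a. P')"
  have pstE: "pstar E x = c" unfolding E_def pstar_def using pst by simp
  have pWE: "pW E x w = pW D x w" for w
    unfolding E_def pW_def cprob_def
    using obs_prob[OF obs, of "\<lambda>y. fst y \<and> snd y = w"] obs_prob[OF obs, of "\<lambda>y. snd y = w"] by simp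
  have mT: "misrep E x w True = (c - v w) / c" if "w \<in> WW" for w
    using cw that unfolding E_def misrep_def by blast
  have mF: "misrep E x w False = (pW D x w - v w) / (1 - c)" if "w \<in> WW" for w
    using cw that unfolding E_def misrep_def pW_def by blast
  have "model WW {x} E"
    unfolding model_def
  proof (intro conjI)
    show "W_support WW {x} E"
      unfolding W_support_def
    proof (intro ballI conjI)
      fix x' z assume "x' \<in> {x}" "z \<in> set_pmf (E x')"
      then have "snd z \<in> set_pmf (map_pmf snd P')" unfolding E_def by simp
      then have "snd z \<in> snd ` set_pmf (D x)" unfolding obs by simp
      then show "snd (snd z) \<in> WW" using supp by auto
    next
      fix x' w assume "x' \<in> {x}" "w \<in> WW"
      then show "measure_pmf.prob (E x') {z. snd (snd z) = w} > 0"
        using pos obs_prob[OF obs, of "\<lambda>y. snd y = w"] unfolding E_def by simp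
    qed
    show "exclusion WW {x} E" unfolding exclusion_def pstarW_def pstar_def
      using cw pst unfolding E_def by simp
    show "boundary WW {x} E" unfolding boundary_def using BD x pWE unfolding boundary_def by auto
    show "degree_misrep WW {x} E" unfolding degree_misrep_def
    proof (intro ballI)
      fix w x' assume "x' \<in> {x}" "w \<in> WW"
      then show "misrep E x' w False + misrep E x' w True \<le> 1"
        using mT mF qw ar(3,4) v1 v2 W by auto
    qed
    show "monotonicity WW {x} E" unfolding monotonicity_def
    proof (intro ballI allI impI)
      fix x' y wa wb assume "x' \<in> {x}" "wa \<in> WW" "wb \<in> WW" "wb < wa"
      then have e: "x' = x" "wa = w2" "wb = w1" using W lt by auto
      show "misrep E x' wa y \<le> misrep E x' wb y"
      proof (cases y)
        case True then show ?thesis unfolding e using mT W ar(6) v1 v2 by auto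
      next
        case False then show ?thesis unfolding e using mF W qw ar(5) v1 v2 lt by auto
      qed
    qed
  qed
  then have "model WW {x} (\<lambda>_. P')" unfolding E_def .
  then have "model WW XX (D(x := P'))" by (rule model_upd[OF M])
  moreover have "\<forall>x'\<in>XX. observed (D(x := P')) x' = observed D x'"
    unfolding observed_def using obs by simp
  moreover have "pstar (D(x := P')) x = c" unfolding pstar_def using pst by simp
  ultimately show ?thesis by blast
qed


theorem proposition2:
  fixes WW :: "real set" and XX :: "'x set" and D :: "'x \<Rightarrow> cdist"
  assumes "finite WW" and "WW \<noteq> {}"
    and "W_support WW XX D"
    and "exclusion WW XX D"
    and "monotonicity WW XX D"
    and "degree_misrep WW XX D"
    and "boundary WW XX D"
  shows "(\<forall>x\<in>XX. L2 WW D x \<le> pstar D x \<and> pstar D x \<le> U2 WW D x)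
    \<and> (card WW = 2 \<longrightarrow>
        (\<forall>x\<in>XX. \<forall>c. L2 WW D x \<le> c \<and> c \<le> U2 WW D x \<longrightarrow>
           (\<exists>D'. model WW XX D' \<and> (\<forall>x'\<in>XX. observed D' x' = observed D x')
                 \<and> pstar D' x = c)))"
proof -
  have M: "model WW XX D" unfolding model_def using assms by auto
  have P1: "\<forall>x\<in>XX. L2 WW D x \<le> pstar D x \<and> pstar D x \<le> U2 WW D x"
    using part1[OF assms] by blast
  have P2: "card WW = 2 \<longrightarrow>
        (\<forall>x\<in>XX. \<forall>c. L2 WW D x \<le> c \<and> c \<le> U2 WW D x \<longrightarrow>
           (\<exists>D'. model WW XX D' \<and> (\<forall>x'\<in>XX. observed D' x' = observed D x')
                 \<and> pstar D' x = c))"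
  proof (intro impI ballI allI)
    fix x c assume "card WW = 2" "x \<in> XX" "L2 WW D x \<le> c \<and> c \<le> U2 WW D x"
    then show "\<exists>D'. model WW XX D' \<and> (\<forall>x'\<in>XX. observed D' x' = observed D x') \<and> pstar D' x = c"
      using part2[OF assms(1) M] by blast
  qed
  show ?thesis using P1 P2 by blast
qed

end
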